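(* Let $b_1,\dots,b_n$ be nonnegative integers with $\sum_{i=1}^n b_i\ge n-1$. Then for every Nash equilibrium of $(b_1,\dots,b_n)$-BG, in either the MAX or the SUM version, the underlying graph $U(G)$ of its realization $G$ is connected.
   Context: Bounded budget network creation game $(b_1,\dots,b_n)$-BG: $n$ players with integer budgets $0\le b_i\le n-1$. A strategy of player $i$ is a set $S_i\subseteq\{1,\dots,n\}\setminus\{i\}$ with $|S_i|=b_i$; a profile is realized by the directed graph $G$ on $u_1,\dots,u_n$ with an arc $\overrightarrow{u_iu_j}$ iff $j\in S_i$. $U(G)$ is the undirected multigraph obtained by ignoring directions. $\operatorname{dist}(u,v)$ is the distance in $U(G)$, defined as $n^2$ between different components. SUM cost: $c_{SUM}(u)=\sum_v\operatorname{dist}(u,v)$; MAX cost: $c_{MAX}(u)=\max_v\operatorname{dist}(u,v)+(\kappa-1)n^2$, $\kappa$ the number of components of $U(G)$. A Nash equilibrium (in a version) is a profile in which no player can decrease its cost (of that version) by changing its own strategy while the others are fixed. *)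

theory Defs
  imports Main
begin

text \<open>Players are 0,...,n-1 (vertex u_i is i). A profile is S :: nat => nat set,
 budgets b :: nat => nat.\<close>

definition valid_strategy :: "nat \<Rightarrow> (nat \<Rightarrow> nat) \<Rightarrow> nat \<Rightarrow> nat set \<Rightarrow> bool" where
  "valid_strategy n b i T \<longleftrightarrow> T \<subseteq> {0..<n} - {i} \<and> card T = b i"

definition is_profile :: "nat \<Rightarrow> (nat \<Rightarrow> nat) \<Rightarrow> (nat \<Rightarrow> nat set) \<Rightarrow> bool" where
  "is_profile n b S \<longleftrightarrow> (\<forall>i<n. valid_strategy n b i (S i))"

definition uadj :: "nat \<Rightarrow> (nat \<Rightarrow> nat set) \<Rightarrow> nat \<Rightarrow> nat \<Rightarrow> bool" where
  "uadj n S u v \<longleftrightarrow> u < n \<and> v < n \<and> (v \<in> S u \<or> u \<in> S v)"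

definition reach :: "nat \<Rightarrow> (nat \<Rightarrow> nat set) \<Rightarrow> nat \<Rightarrow> nat \<Rightarrow> bool" where
  "reach n S u v \<longleftrightarrow> (\<exists>k. (uadj n S ^^ k) u v)"

definition gdist :: "nat \<Rightarrow> (nat \<Rightarrow> nat set) \<Rightarrow> nat \<Rightarrow> nat \<Rightarrow> nat" where
  "gdist n S u v = (if reach n S u v then (LEAST k. (uadj n S ^^ k) u v) else n^2)"

definition num_components :: "nat \<Rightarrow> (nat \<Rightarrow> nat set) \<Rightarrow> nat" where
  "num_components n S = card ((\<lambda>u. {v. v < n \<and> reach n S u v}) ` {0..<n})"

definition cost_sum :: "nat \<Rightarrow> (nat \<Rightarrow> nat set) \<Rightarrow> nat \<Rightarrow> nat" where
  "cost_sum n S u = (\<Sum>v<n. gdist n S u v)"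

definition cost_max :: "nat \<Rightarrow> (nat \<Rightarrow> nat set) \<Rightarrow> nat \<Rightarrow> nat" where
  "cost_max n S u = Max (gdist n S u ` {0..<n}) + (num_components n S - 1) * n^2"

definition nash_eq :: "(nat \<Rightarrow> (nat \<Rightarrow> nat set) \<Rightarrow> nat \<Rightarrow> nat) \<Rightarrow> nat \<Rightarrow> (nat \<Rightarrow> nat)
   \<Rightarrow> (nat \<Rightarrow> nat set) \<Rightarrow> bool" where
  "nash_eq c n b S \<longleftrightarrow> is_profile n b S \<and>
     (\<forall>i<n. \<forall>T. valid_strategy n b i T \<longrightarrow> c n S i \<le> c n (S(i := T)) i)"

definition ug_connected :: "nat \<Rightarrow> (nat \<Rightarrow> nat set) \<Rightarrow> bool" where
  "ug_connected n S \<longleftrightarrow> (\<forall>u<n. \<forall>v<n. reach n S u v)"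

end

theory Submission
  imports Defs "HOL-Library.Transitive_Closure_Table"
begin

definition adjA :: "nat \<Rightarrow> (nat \<times> nat) set \<Rightarrow> nat \<Rightarrow> nat \<Rightarrow> bool" where
  "adjA n A u v \<longleftrightarrow> u < n \<and> v < n \<and> ((u,v) \<in> A \<or> (v,u) \<in> A)"

definition comps :: "nat \<Rightarrow> (nat \<Rightarrow> nat \<Rightarrow> bool) \<Rightarrow> nat set set" where
  "comps n R = (\<lambda>u. {v. v < n \<and> R\<^sup>*\<^sup>* u v}) ` {0..<n}"

lemma symp_adjA: "symp (adjA n A)"
  by (auto simp: symp_def adjA_def)

lemma rtranclp_sym:
  assumes "symp R" "R\<^sup>*\<^sup>* x y" shows "R\<^sup>*\<^sup>* y x"
  using assms(2)
proof (induction rule: rtranclp_induct)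
  case base then show ?case by simp
next
  case (step y z)
  then have "R z y" using assms(1) by (auto simp: symp_def)
  then show ?case using step by (meson converse_rtranclp_into_rtranclp)
qed

lemma adjA_mono:
  assumes "A \<subseteq> B" "(adjA n A)\<^sup>*\<^sup>* x y" shows "(adjA n B)\<^sup>*\<^sup>* x y"
  using assms(2)
proof (induction rule: rtranclp_induct)
  case base then show ?case by simp
next
  case (step y z)
  then have "adjA n B y z" using assms(1) by (auto simp: adjA_def)
  then show ?case using step by (meson rtranclp.rtrancl_into_rtrancl)
qed

lemma comps_merge:
  assumes mono: "\<And>x y. R\<^sup>*\<^sup>* x y \<Longrightarrow> R'\<^sup>*\<^sup>* x y" and sy: "symp R'"
    and "a < n" "b < n" "R'\<^sup>*\<^sup>* a b" "\<not> R\<^sup>*\<^sup>* a b"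
  shows "card (comps n R') < card (comps n R)"
proof -
  define F where "F X = {v. v < n \<and> (\<exists>x\<in>X. R'\<^sup>*\<^sup>* x v)}" for X
  have Fc: "F {v. v < n \<and> R\<^sup>*\<^sup>* u v} = {v. v < n \<and> R'\<^sup>*\<^sup>* u v}" if "u < n" for u
  proof
    show "F {v. v < n \<and> R\<^sup>*\<^sup>* u v} \<subseteq> {v. v < n \<and> R'\<^sup>*\<^sup>* u v}"
      unfolding F_def using mono by (auto intro: rtranclp_trans)
    show "{v. v < n \<and> R'\<^sup>*\<^sup>* u v} \<subseteq> F {v. v < n \<and> R\<^sup>*\<^sup>* u v}"
      unfolding F_def using that by auto
  qed
  have img: "comps n R' = F ` comps n R"
    unfolding comps_def image_image using Fc by auto
  have ba: "R'\<^sup>*\<^sup>* b a" using rtranclp_sym[OF sy assms(5)] .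
  have eq: "{v. v < n \<and> R'\<^sup>*\<^sup>* a v} = {v. v < n \<and> R'\<^sup>*\<^sup>* b v}"
    using assms(5) ba by (auto intro: rtranclp_trans)
  have ne: "{v. v < n \<and> R\<^sup>*\<^sup>* a v} \<noteq> {v. v < n \<and> R\<^sup>*\<^sup>* b v}"
    using assms(4,6) by auto
  have ni: "\<not> inj_on F (comps n R)"
  proof
    assume "inj_on F (comps n R)"
    moreover have "{v. v < n \<and> R\<^sup>*\<^sup>* a v} \<in> comps n R" "{v. v < n \<and> R\<^sup>*\<^sup>* b v} \<in> comps n R"
      using assms(3,4) unfolding comps_def by auto
    ultimately show False using ne eq Fc[OF assms(3)] Fc[OF assms(4)]
      unfolding inj_on_def by metis
  qed
  have fin: "finite (comps n R)" unfolding comps_def by simp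
  have "card (F ` comps n R) \<noteq> card (comps n R)" using ni inj_on_iff_eq_card[OF fin] by blast
  moreover have "card (F ` comps n R) \<le> card (comps n R)" using card_image_le[OF fin] .
  ultimately show ?thesis using img by simp
qed

lemma empty_reach: "(adjA n {})\<^sup>*\<^sup>* u v \<Longrightarrow> u = v"
  by (induction rule: rtranclp_induct) (auto simp: adjA_def)

lemma count_bridges:
  "finite A \<Longrightarrow> A \<subseteq> {0..<n} \<times> {0..<n} \<Longrightarrow>
   (\<forall>(i,j)\<in>A. \<not> (adjA n (A - {(i,j)}))\<^sup>*\<^sup>* i j) \<Longrightarrow>
   card A + card (comps n (adjA n A)) \<le> n"
proof (induction A rule: finite_induct)
  case empty
  have "comps n (adjA n {}) = (\<lambda>u. {u}) ` {0..<n}"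
    unfolding comps_def using empty_reach by (intro image_cong) auto
  moreover have "card ((\<lambda>u. {u}) ` {0..<n}) = n"
    by (subst card_image) (auto simp: inj_on_def)
  ultimately show ?case by simp
next
  case (insert x F)
  obtain i j where x: "x = (i,j)" by (cases x)
  have br: "\<forall>(i,j)\<in>F. \<not> (adjA n (F - {(i,j)}))\<^sup>*\<^sup>* i j"
  proof (clarify)
    fix i' j' assume "(i',j') \<in> F" "(adjA n (F - {(i',j')}))\<^sup>*\<^sup>* i' j'"
    then have "(adjA n (insert x F - {(i',j')}))\<^sup>*\<^sup>* i' j'"
      by (rule_tac adjA_mono[of "F - {(i',j')}"]) auto
    then show False using insert.prems(2) \<open>(i',j') \<in> F\<close> by auto
  qed
  have IH: "card F + card (comps n (adjA n F)) \<le> n"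
    using insert br by auto
  have nij: "\<not> (adjA n F)\<^sup>*\<^sup>* i j"
    using insert.prems(2) insert.hyps(2) x by auto
  have ij: "i < n" "j < n" using insert.prems(1) x by auto
  have "adjA n (insert x F) i j" using ij x by (simp add: adjA_def)
  then have "(adjA n (insert x F))\<^sup>*\<^sup>* i j" by simp
  then have "card (comps n (adjA n (insert x F))) < card (comps n (adjA n F))"
    by (intro comps_merge[OF _ symp_adjA ij _ nij]) (auto intro: adjA_mono)
  then show ?case using IH insert.hyps by simp
qed

lemma path_bound:
  "rtrancl_path R u xs v \<Longrightarrow> (\<And>x y. R x y \<Longrightarrow> y < n) \<Longrightarrow> set xs \<subseteq> {..<n}"
  by (induction rule: rtrancl_path.induct) auto

lemma path_pow: "rtrancl_path R u xs v \<Longrightarrow> (R ^^ length xs) u v"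
proof (induction rule: rtrancl_path.induct)
  case (base x) then show ?case by simp
next
  case (step x y ys z)
  have "(R ^^ Suc (length ys)) x z" by (rule relpowp_Suc_I2[OF step(1) step(3)])
  then show ?case by simp
qed

lemma dist_bound:
  assumes "\<And>x y. R x y \<Longrightarrow> y < n" "u < n" "R\<^sup>*\<^sup>* u v"
  shows "\<exists>k \<le> n - 1. (R ^^ k) u v"
proof -
  obtain xs where "rtrancl_path R u xs v" using assms(3) rtranclp_eq_rtrancl_path by metis
  then obtain xs' where p: "rtrancl_path R u xs' v" "distinct (u # xs')"
    using rtrancl_path_distinct by metis
  have "set (u # xs') \<subseteq> {..<n}" using path_bound[OF p(1) assms(1)] assms(2) by auto
  then have "card (set (u # xs')) \<le> n" using card_mono[of "{..<n}"] by fastforce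
  then have "length (u # xs') \<le> n" using distinct_card[OF p(2)] by simp
  then show ?thesis using path_pow[OF p(1)] by (intro exI[of _ "length xs'"]) simp
qed

lemma uadj_eq: "uadj n S = adjA n (Sigma {..<n} S)"
  by (auto simp: fun_eq_iff uadj_def adjA_def)

lemma reach_eq: "reach n S u v = (uadj n S)\<^sup>*\<^sup>* u v"
  by (simp add: reach_def rtranclp_power)

lemma ncomp_eq: "num_components n S = card (comps n (uadj n S))"
  by (simp add: num_components_def comps_def reach_eq)

lemma gdist_reach: assumes "u < n" "reach n S u v" shows "gdist n S u v \<le> n - 1"
proof -
  have "\<exists>k \<le> n - 1. (uadj n S ^^ k) u v"
    using dist_bound[of "uadj n S" n u v] assms by (auto simp: uadj_def reach_eq)
  then obtain k where "k \<le> n - 1" "(uadj n S ^^ k) u v" by blast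
  moreover have "(LEAST k. (uadj n S ^^ k) u v) \<le> k" using \<open>(uadj n S ^^ k) u v\<close> by (rule Least_le)
  ultimately show ?thesis using assms(2) unfolding gdist_def by simp
qed

lemma gdist_le: assumes "u < n" shows "gdist n S u v \<le> n^2"
proof (cases "reach n S u v")
  case True
  then have "gdist n S u v \<le> n - 1" using gdist_reach assms by blast
  also have "\<dots> \<le> n^2" by (cases n) (auto simp: power2_eq_square)
  finally show ?thesis .
next
  case False then show ?thesis by (simp add: gdist_def)
qed

theorem mainTheorem13:
  fixes n :: nat and b :: "nat \<Rightarrow> nat" and S :: "nat \<Rightarrow> nat set"
  assumes "\<forall>i<n. b i \<le> n - 1"
    and "(\<Sum>i<n. b i) \<ge> n - 1"
    and "nash_eq cost_max n b S \<or> nash_eq cost_sum n b S"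
  shows "ug_connected n S"
proof (rule ccontr)
  assume nc: "\<not> ug_connected n S"
  from assms(3) have prof: "is_profile n b S" by (auto simp: nash_eq_def)
  then have Si: "\<And>i. i < n \<Longrightarrow> S i \<subseteq> {0..<n} - {i} \<and> card (S i) = b i"
    by (simp add: is_profile_def valid_strategy_def)
  have finS: "\<And>i. i < n \<Longrightarrow> finite (S i)" using Si by (meson finite_atLeastLessThan finite_Diff finite_subset)
  define E where "E = Sigma {..<n} S"
  have uE: "uadj n S = adjA n E" unfolding E_def by (rule uadj_eq)
  have finE: "finite E" unfolding E_def using finS by auto
  have Esub: "E \<subseteq> {0..<n} \<times> {0..<n}" unfolding E_def using Si by auto
  have cardE: "card E = (\<Sum>i<n. b i)"
  proof -
    have "card E = (\<Sum>i<n. card (S i))" unfolding E_def using finS by simp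
    also have "\<dots> = (\<Sum>i<n. b i)" using Si by (intro sum.cong) auto
    finally show ?thesis .
  qed
  from nc obtain u v where uv: "u < n" "v < n" "\<not> reach n S u v"
    unfolding ug_connected_def by blast
  have "u \<noteq> v" using uv(3) by (auto simp: reach_eq)
  then have n2: "n \<ge> 2" using uv by linarith
  let ?R = "adjA n E"
  have kap: "card (comps n ?R) \<ge> 2"
  proof -
    let ?cu = "{x. x < n \<and> ?R\<^sup>*\<^sup>* u x}" and ?cv = "{x. x < n \<and> ?R\<^sup>*\<^sup>* v x}"
    have "?cu \<noteq> ?cv" using uv by (auto simp: reach_eq uE)
    then have "card {?cu, ?cv} = 2" by simp
    moreover have "{?cu, ?cv} \<subseteq> comps n ?R" using uv unfolding comps_def by auto
    moreover have "finite (comps n ?R)" unfolding comps_def by simp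
    ultimately show ?thesis by (metis card_mono)
  qed
  have "\<exists>(i,j)\<in>E. (adjA n (E - {(i,j)}))\<^sup>*\<^sup>* i j"
  proof (rule ccontr)
    assume "\<not> ?thesis"
    then have "card E + card (comps n ?R) \<le> n"
      using count_bridges[OF finE Esub] by blast
    then show False using kap cardE assms(2) n2 by linarith
  qed
  then obtain i j where ijE: "(i,j) \<in> E" and ijr: "(adjA n (E - {(i,j)}))\<^sup>*\<^sup>* i j" by blast
  have i: "i < n" and jS: "j \<in> S i" using ijE by (auto simp: E_def)
  have "\<exists>w<n. \<not> reach n S i w"
  proof (rule ccontr)
    assume "\<not> ?thesis"
    then have "?R\<^sup>*\<^sup>* i u" "?R\<^sup>*\<^sup>* i v" using uv by (auto simp: reach_eq uE)
    then have "?R\<^sup>*\<^sup>* u v" using rtranclp_sym[OF symp_adjA] by (meson rtranclp_trans)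
    then show False using uv by (simp add: reach_eq uE)
  qed
  then obtain w where w: "w < n" "\<not> ?R\<^sup>*\<^sup>* i w" by (auto simp: reach_eq uE)
  have wS: "w \<notin> S i"
  proof
    assume "w \<in> S i"
    then have "?R i w" using i w(1) by (auto simp: adjA_def E_def)
    then show False using w(2) by auto
  qed
  have wi: "w \<noteq> i" using w(2) by auto
  define T where "T = insert w (S i - {j})"
  have cT: "card T = b i"
  proof -
    have "card T = card (S i - {j}) + 1" unfolding T_def using finS[OF i] wS by simp
    also have "\<dots> = card (S i)" using jS finS[OF i] by (simp add: card_Diff_singleton)
        (metis One_nat_def Suc_pred card_gt_0_iff emptyE)
    finally show ?thesis using Si[OF i] by simp
  qed
  have vT: "valid_strategy n b i T"
    unfolding valid_strategy_def using cT Si[OF i] w(1) wi by (auto simp: T_def)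
  define S' where "S' = S(i := T)"
  define E' where "E' = insert (i,w) (E - {(i,j)})"
  have uE': "uadj n S' = adjA n E'"
  proof -
    have "Sigma {..<n} S' = E'" unfolding S'_def E'_def E_def T_def using i by (auto split: if_splits)
    then show ?thesis by (simp add: uadj_eq)
  qed
  let ?R' = "adjA n E'"
  have sub1: "(adjA n (E - {(i,j)}))\<^sup>*\<^sup>* x y \<Longrightarrow> ?R'\<^sup>*\<^sup>* x y" for x y
    by (rule adjA_mono[of "E - {(i,j)}"]) (auto simp: E'_def)
  have ij': "?R'\<^sup>*\<^sup>* i j" using sub1[OF ijr] .
  have ji': "?R'\<^sup>*\<^sup>* j i" using rtranclp_sym[OF symp_adjA ij'] .
  have step: "?R x y \<Longrightarrow> ?R'\<^sup>*\<^sup>* x y" for x y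
  proof -
    assume a: "?R x y"
    show ?thesis
    proof (cases "(x,y) = (i,j) \<or> (y,x) = (i,j)")
      case True then show ?thesis using ij' ji' by auto
    next
      case False
      then have "?R' x y" using a by (auto simp: adjA_def E'_def)
      then show ?thesis by simp
    qed
  qed
  have mono: "?R\<^sup>*\<^sup>* x y \<Longrightarrow> ?R'\<^sup>*\<^sup>* x y" for x y
  proof (induction rule: rtranclp_induct)
    case base then show ?case by simp
  next
    case (step y z) then show ?case using step by (meson rtranclp_trans \<open>?R y z\<close> step(3) \<open>\<And>x y. ?R x y \<Longrightarrow> ?R'\<^sup>*\<^sup>* x y\<close>)
  qed
  have iw': "?R'\<^sup>*\<^sup>* i w" using i w(1) by (intro r_into_rtranclp) (auto simp: adjA_def E'_def)
  have rS: "reach n S x y = ?R\<^sup>*\<^sup>* x y" for x y by (simp add: reach_eq uE)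
  have rS': "reach n S' x y = ?R'\<^sup>*\<^sup>* x y" for x y by (simp add: reach_eq uE')
  have gw: "gdist n S i w = n^2" using w(2) rS by (simp add: gdist_def)
  have gw': "gdist n S' i w \<le> n - 1" using gdist_reach[OF i] iw' rS' by blast
  have n0: "n^2 > 0" using n2 by simp
  from assms(3) show False
  proof
    assume ne: "nash_eq cost_max n b S"
    then have le: "cost_max n S i \<le> cost_max n S' i"
      using i vT unfolding nash_eq_def S'_def by blast
    have wm: "n^2 \<in> gdist n S i ` {0..<n}" using w(1) gw[symmetric] by (intro image_eqI) auto
    have M: "Max (gdist n S i ` {0..<n}) = n^2"
      by (rule Max_eqI) (use gdist_le[OF i] wm in auto)
    have M': "Max (gdist n S' i ` {0..<n}) \<le> n^2"
      using gdist_le[OF i] n2 by (subst Max_le_iff) auto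
    have k: "num_components n S' < num_components n S"
      unfolding ncomp_eq uE uE' using comps_merge[OF mono symp_adjA i w(1) iw' w(2)] .
    have "(num_components n S' - 1) * n^2 < (num_components n S - 1) * n^2"
    proof -
      have "num_components n S' > 0"
        unfolding ncomp_eq comps_def using n2 by (simp add: card_gt_0_iff)
      then have "num_components n S' - 1 < num_components n S - 1" using k by linarith
      then show ?thesis using n0 by simp
    qed
    then have "cost_max n S' i < cost_max n S i"
      unfolding cost_max_def using M M' by linarith
    then show False using le by simp
  next
    assume ne: "nash_eq cost_sum n b S"
    then have le: "cost_sum n S i \<le> cost_sum n S' i"
      using i vT unfolding nash_eq_def S'_def by blast
    let ?A = "{..<n} - {w}"
    have pv: "gdist n S' i x \<le> gdist n S i x + (n - 1)" if "x \<in> ?A" for x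
    proof (cases "reach n S i x")
      case True
      then have "reach n S' i x" using rS rS' mono by blast
      then show ?thesis using gdist_reach[OF i] by fastforce
    next
      case False
      then show ?thesis using gdist_le[OF i, of S' x] by (simp add: gdist_def)
    qed
    have cA: "card ?A = n - 1" using w(1) by simp
    have "cost_sum n S' i = (\<Sum>x\<in>?A. gdist n S' i x) + gdist n S' i w"
      unfolding cost_sum_def using w(1) by (simp add: sum.remove add.commute)
    also have "\<dots> \<le> (\<Sum>x\<in>?A. gdist n S i x + (n - 1)) + (n - 1)"
    proof -
      have "(\<Sum>x\<in>?A. gdist n S' i x) \<le> (\<Sum>x\<in>?A. gdist n S i x + (n - 1))"
        by (rule sum_mono) (rule pv)
      then show ?thesis using gw' by (rule add_mono)
    qed
    also have "\<dots> = (\<Sum>x\<in>?A. gdist n S i x) + (n - 1) * (n - 1) + (n - 1)"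
      using cA by (simp only: sum.distrib sum_constant) (simp add: mult.commute)
    also have "\<dots> < (\<Sum>x\<in>?A. gdist n S i x) + n^2"
    proof -
      have "(n - 1) * (n - 1) + (n - 1) < n^2" using n2 by (cases n) (auto simp: power2_eq_square)
      then show ?thesis by linarith
    qed
    also have "\<dots> = cost_sum n S i"
      unfolding cost_sum_def using w(1) gw by (simp add: sum.remove add.commute)
    finally show False using le by simp
  qed
qed

end
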